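(* Let $P$ be a nice polygon with an even number $n$ of vertices $A_0,\dots,A_{n-1}$ (indices mod $n$) and center $O$, and let $f\colon P\to\mathbb{R}$ be convex on every triangle $OA_kA_{k+1}$, $k=0,\dots,n-1$. Then $$\operatorname{Avg}(f,P)\le\frac13\cdot\frac{1}{n/2}\sum_{k\ \mathrm{odd}}f(A_k)+\frac23\cdot\frac{1}{n/2}\sum_{k\ \mathrm{even}}\operatorname{Avg}(f,OA_k),$$ $$\operatorname{Avg}(f,P)\le\frac13\cdot\frac{1}{n/2}\sum_{k\ \mathrm{even}}f(A_k)+\frac23\cdot\frac{1}{n/2}\sum_{k\ \mathrm{odd}}\operatorname{Avg}(f,OA_k),$$ where the sums run over $k\in\{0,\dots,n-1\}$.
   Context: A nice polygon is a star-shaped polygon $P$ with vertices $A_0,\dots,A_{n-1}$ for which there exists a point $O$ (called its center) in the kernel of $P$ such that all triangles $OA_kA_{k+1}$, $k=0,\dots,n-1$ (indices mod $n$), have the same area. $\operatorname{Avg}(f,P)$ is the average of $f$ over $P$ with respect to area, and $\operatorname{Avg}(f,OA_k)$ is the average of $f$ over the segment $OA_k$ with respect to length. *)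

theory Defs
  imports "HOL-Analysis.Analysis"
begin

fun polygonal_path :: "(real^2) list \<Rightarrow> real \<Rightarrow> real^2" where
  "polygonal_path [] = linepath 0 0"
| "polygonal_path [p] = linepath p p"
| "polygonal_path [p, q] = linepath p q"
| "polygonal_path (p # q # r # ps) = linepath p q +++ polygonal_path (q # r # ps)"

definition polygon_boundary :: "nat \<Rightarrow> (nat \<Rightarrow> real^2) \<Rightarrow> real \<Rightarrow> real^2" where
  "polygon_boundary n A = polygonal_path (map A [0..<n] @ [A 0])"

definition polygon_region :: "nat \<Rightarrow> (nat \<Rightarrow> real^2) \<Rightarrow> (real^2) set" where
  "polygon_region n A = path_image (polygon_boundary n A) \<union> inside (path_image (polygon_boundary n A))"

definition simple_polygon :: "nat \<Rightarrow> (nat \<Rightarrow> real^2) \<Rightarrow> bool" where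
  "simple_polygon n A \<longleftrightarrow> 3 \<le> n \<and> simple_path (polygon_boundary n A)"

definition kernel :: "(real^2) set \<Rightarrow> (real^2) set" where
  "kernel P = {c \<in> P. \<forall>x\<in>P. closed_segment c x \<subseteq> P}"

definition triangle :: "real^2 \<Rightarrow> real^2 \<Rightarrow> real^2 \<Rightarrow> (real^2) set" where
  "triangle a b c = convex hull {a, b, c}"

definition nice_polygon :: "nat \<Rightarrow> (nat \<Rightarrow> real^2) \<Rightarrow> real^2 \<Rightarrow> bool" where
  "nice_polygon n A c \<longleftrightarrow> simple_polygon n A \<and> c \<in> kernel (polygon_region n A) \<and>
     (\<forall>k<n. measure lebesgue (triangle c (A k) (A (Suc k mod n)))
            = measure lebesgue (triangle c (A 0) (A (Suc 0 mod n))))"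

definition avg_area :: "(real^2 \<Rightarrow> real) \<Rightarrow> (real^2) set \<Rightarrow> real" where
  "avg_area f P = integral P f / measure lebesgue P"

(* average of f over the segment [a,b] w.r.t. length (constant-speed parametrisation) *)
definition avg_segment :: "(real^2 \<Rightarrow> real) \<Rightarrow> real^2 \<Rightarrow> real^2 \<Rightarrow> real" where
  "avg_segment f a b = integral {0..1} (\<lambda>t. f ((1 - t) *\<^sub>R a + t *\<^sub>R b))"

end

theory Submission
  imports Defs
begin



lemma Basis_vec2: "(Basis :: (real^2) set) = {axis 1 1, axis 2 1}"
  apply (simp add: Basis_vec_def)
  apply (auto simp: UNIV_2)
  done

lemma axis12_neq: "axis 1 (1::real) \<noteq> (axis 2 1 :: real^2)"
  by (simp add: axis_eq_axis)

lemma sep_integral_nonneg: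
  fixes \<alpha> \<beta> :: "real \<Rightarrow> real"
  assumes ma: "(\<lambda>u. indicator {0..1} u * \<alpha> u) \<in> borel_measurable borel"
    and mb: "(\<lambda>u. indicator {0..1} u * \<beta> u) \<in> borel_measurable borel"
    and na: "\<And>u. u \<in> {0..1} \<Longrightarrow> 0 \<le> \<alpha> u"
    and nb: "\<And>u. u \<in> {0..1} \<Longrightarrow> 0 \<le> \<beta> u"
    and ia: "(\<alpha> has_integral A) {0..1}"
    and ib: "(\<beta> has_integral B) {0..1}"
  shows "((\<lambda>v::real^2. \<beta> (v$1) * \<alpha> (v$2)) has_integral (B * A)) (cbox 0 1)"
proof -
  define F1 where "F1 = (\<lambda>u. indicator {0..1} u * \<beta> u)"
  define F2 where "F2 = (\<lambda>u. indicator {0..1} u * \<alpha> u)"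
  define fb where "fb = (\<lambda>b::real^2. if b = axis 1 1 then (\<lambda>x. ennreal (F1 x)) else (\<lambda>x. ennreal (F2 x)))"
  have F1n: "0 \<le> F1 x" for x using nb by (simp add: F1_def indicator_def)
  have F2n: "0 \<le> F2 x" for x using na by (simp add: F2_def indicator_def)
  have A0: "0 \<le> A" using ia na by (rule has_integral_nonneg)
  have B0: "0 \<le> B" using ib nb by (rule has_integral_nonneg)
  have prodeq: "(\<Prod>b\<in>Basis. fb b (x \<bullet> b)) = ennreal (F1 (x$1) * F2 (x$2))" for x :: "real^2"
    using axis12_neq F1n F2n by (simp add: Basis_vec2 fb_def cart_eq_inner_axis ennreal_mult)
  have "(\<integral>\<^sup>+x. (\<Prod>b\<in>Basis. fb b (x \<bullet> b)) \<partial>lborel) = (\<Prod>b\<in>(Basis::(real^2) set). (\<integral>\<^sup>+x. fb b x \<partial>lborel))"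
    by (rule nn_integral_lborel_prod) (auto simp: fb_def F1_def F2_def intro!: measurable_compose[OF ma] measurable_compose[OF mb])
  also have "\<dots> = (\<integral>\<^sup>+x. F1 x \<partial>lborel) * (\<integral>\<^sup>+x. F2 x \<partial>lborel)"
    using axis12_neq by (simp add: Basis_vec2 fb_def)
  also have "(\<integral>\<^sup>+x. F1 x \<partial>lborel) = ennreal B"
    unfolding F1_def using nn_integral_has_integral_lebesgue[OF nb ib] by simp
  also have "(\<integral>\<^sup>+x. F2 x \<partial>lborel) = ennreal A"
    unfolding F2_def using nn_integral_has_integral_lebesgue[OF na ia] by simp
  finally have nn: "(\<integral>\<^sup>+x. (F1 ((x::real^2)$1) * F2 (x$2)) \<partial>lborel) = ennreal (B * A)"
    by (simp add: prodeq ennreal_mult A0 B0 flip: ennreal_mult)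
  have meas: "(\<lambda>x::real^2. F1 (x$1) * F2 (x$2)) \<in> borel_measurable borel"
  proof -
    have "F1 \<in> borel_measurable borel" "F2 \<in> borel_measurable borel"
      using ma mb by (auto simp: F1_def F2_def)
    then show ?thesis by measurable
  qed
  have "((\<lambda>x::real^2. F1 (x$1) * F2 (x$2)) has_integral (B * A)) UNIV"
    by (rule nn_integral_has_integral[OF meas _ nn]) (use F1n F2n A0 B0 in auto)
  moreover have "(\<lambda>x::real^2. F1 (x$1) * F2 (x$2)) = (\<lambda>x. if x \<in> cbox 0 1 then \<beta> (x$1) * \<alpha> (x$2) else 0)"
    by (auto simp: fun_eq_iff F1_def F2_def indicator_def mem_box_cart forall_2)
  ultimately show ?thesis
    by (simp add: has_integral_restrict_UNIV)
qed



lemma convex_onD2: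
  assumes "convex_on S f" "x \<in> S" "y \<in> S" "0 \<le> u" "0 \<le> v" "u + v = 1"
  shows "f (u *\<^sub>R x + v *\<^sub>R y) \<le> u * f x + v * f y"
  using assms unfolding convex_on_def by blast

lemma in_hull3:
  assumes "0 \<le> u" "0 \<le> v" "0 \<le> w" "u + v + w = 1"
  shows "u *\<^sub>R a + v *\<^sub>R b + w *\<^sub>R c \<in> convex hull {a, b, c}"
  unfolding convex_hull_3 using assms by blast

lemma tri_bound:
  fixes f :: "real^2 \<Rightarrow> real"
  assumes cv: "convex_on (convex hull {a,b,q}) f"
  shows "\<exists>M. \<forall>x\<in>convex hull {a,b,q}. \<bar>f x\<bar> \<le> M"
proof -
  define T where "T = convex hull {a,b,q}"
  define U where "U = max (f a) (max (f b) (f q))"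
  have up: "\<forall>x\<in>T. f x \<le> U"
    unfolding T_def by (rule convex_on_convex_hull_bound[OF cv]) (auto simp: U_def)
  define m where "m = (1/3) *\<^sub>R a + (1/3) *\<^sub>R b + (1/3) *\<^sub>R q"
  have lo: "3 * f m - 2 * U \<le> f x" if x: "x \<in> T" for x
  proof -
    obtain u v w where uvw: "0 \<le> u" "0 \<le> v" "0 \<le> w" "u + v + w = 1"
      and xe: "x = u *\<^sub>R a + v *\<^sub>R b + w *\<^sub>R q"
      using x unfolding T_def convex_hull_3 by blast
    define y where "y = ((1-u)/2) *\<^sub>R a + ((1-v)/2) *\<^sub>R b + ((1-w)/2) *\<^sub>R q"
    have yT: "y \<in> T" unfolding T_def y_def
      using uvw by (intro in_hull3) (auto simp: field_simps)
    have "m = (1/3) *\<^sub>R x + (2/3) *\<^sub>R y"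
      proof -
      have w: "w = 1 - u - v" using uvw(4) by simp
      show ?thesis unfolding m_def xe y_def w
        by (simp add: vec_eq_iff forall_2 field_simps)
    qed
    then have "f m \<le> (1/3) * f x + (2/3) * f y"
      using convex_onD2[OF cv, of x y "1/3" "2/3"] x yT unfolding T_def by auto
    moreover have "f y \<le> U" using up yT by auto
    ultimately show ?thesis by linarith
  qed
  show ?thesis
    by (rule exI[of _ "\<bar>U\<bar> + \<bar>3 * f m - 2 * U\<bar>"]) (use up lo in \<open>fastforce simp: T_def\<close>)
qed



lemma convex_abs_int:
  fixes f :: "'a::euclidean_space \<Rightarrow> real"
  assumes cf: "convex_on T f" and cT: "compact T" and bd: "\<And>x. x \<in> T \<Longrightarrow> \<bar>f x\<bar> \<le> M"
  shows "f absolutely_integrable_on T"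
proof -
  have cvT: "convex T" using cf by (simp add: convex_on_def)
  have "convex_on (interior T) f" by (rule convex_on_subset[OF cf interior_subset]) (simp add: convex_interior cvT)
  then have "continuous_on (interior T) f" by (simp add: convex_on_continuous)
  then have "f \<in> borel_measurable (lebesgue_on (interior T))"
    by (rule continuous_imp_measurable_on_sets_lebesgue) simp
  then have "f measurable_on interior T"
    by (simp add: measurable_on_iff_borel_measurable)
  moreover have "negligible (sym_diff (interior T) T)"
    proof (rule negligible_subset[OF negligible_convex_frontier[OF cvT]])
      have "closure T = T" using cT by (simp add: compact_imp_closed)
      then show "sym_diff (interior T) T \<subseteq> frontier T" using interior_subset[of T] unfolding frontier_def by blast
    qed
  ultimately have "f measurable_on T" by (rule measurable_on_spike_set)
  then have m: "f \<in> borel_measurable (lebesgue_on T)"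
    using cT measurable_on_iff_borel_measurable[of T f] lmeasurable_compact[OF cT] fmeasurableD by blast
  show ?thesis
  proof (rule measurable_bounded_by_integrable_imp_absolutely_integrable[OF m])
    show "T \<in> sets lebesgue" using cT by (simp add: lmeasurable_compact fmeasurableD)
    show "(\<lambda>x. M) integrable_on T" using cT by (simp add: lmeasurable_compact integrable_on_const)
    show "norm (f x) \<le> M" if "x \<in> T" for x using bd that by simp
  qed
qed



lemma cov_real:
  fixes f :: "real^2 \<Rightarrow> real" and g :: "real^2 \<Rightarrow> real^2"
  assumes S: "S \<in> sets lebesgue"
    and der: "\<And>x. x \<in> S \<Longrightarrow> (g has_derivative g' x) (at x within S)"
    and inj: "inj_on g S"
    and fi: "f absolutely_integrable_on (g ` S)"
  shows "(\<lambda>x. \<bar>det (matrix (g' x))\<bar> * f (g x)) absolutely_integrable_on S \<and>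
         integral (g ` S) f = integral S (\<lambda>x. \<bar>det (matrix (g' x))\<bar> * f (g x))"
proof -
  define F where "F = (\<lambda>x. vec (f x) :: real^1)"
  have Fi: "F absolutely_integrable_on (g ` S)"
    using fi by (simp add: absolutely_integrable_on_1_iff F_def)
  have "(\<lambda>x. \<bar>det (matrix (g' x))\<bar> *\<^sub>R F (g x)) absolutely_integrable_on S \<and>
           integral S (\<lambda>x. \<bar>det (matrix (g' x))\<bar> *\<^sub>R F(g x)) = integral (g ` S) F"
    using has_absolute_integral_change_of_variables[OF S der inj, of F "integral (g ` S) F"] Fi
    by blast
  then have 1: "(\<lambda>x. \<bar>det (matrix (g' x))\<bar> *\<^sub>R F (g x)) absolutely_integrable_on S"
    and 2: "integral S (\<lambda>x. \<bar>det (matrix (g' x))\<bar> *\<^sub>R F(g x)) = integral (g ` S) F" by blast+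
  from 1 show "(\<lambda>x. \<bar>det (matrix (g' x))\<bar> * f (g x)) absolutely_integrable_on S \<and>
         integral (g ` S) f = integral S (\<lambda>x. \<bar>det (matrix (g' x))\<bar> * f (g x))"
    using 2 by (simp add: absolutely_integrable_on_1_iff integral_on_1_eq[of S] integral_on_1_eq[of "g ` S"] F_def)
qed



definition gT :: "real^2 \<Rightarrow> real^2 \<Rightarrow> real^2 \<Rightarrow> real^2 \<Rightarrow> real^2" where
  "gT a b q v = (1 - v$2) *\<^sub>R ((1 - v$1) *\<^sub>R a + v$1 *\<^sub>R b) + v$2 *\<^sub>R q"

definition gT' :: "real^2 \<Rightarrow> real^2 \<Rightarrow> real^2 \<Rightarrow> real^2 \<Rightarrow> real^2 \<Rightarrow> real^2" where
  "gT' a b q v = (\<lambda>h. (1 - v$2) *\<^sub>R (h$1 *\<^sub>R (b - a)) + h$2 *\<^sub>R (q - ((1 - v$1) *\<^sub>R a + v$1 *\<^sub>R b)))"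

definition DD :: "real^2 \<Rightarrow> real^2 \<Rightarrow> real^2 \<Rightarrow> real" where
  "DD a b q = (b-a)$1 * (q-a)$2 - (b-a)$2 * (q-a)$1"

lemma gT_deriv: "(gT a b q has_derivative gT' a b q v) (at v within S)"
proof -
  have "(gT a b q has_derivative gT' a b q v) (at v)"
    unfolding gT_def gT'_def
    apply (rule derivative_eq_intros refl bounded_linear.has_derivative[OF bounded_linear_vec_nth])+
    apply (simp add: fun_eq_iff algebra_simps)
    done
  then show ?thesis by (rule has_derivative_at_withinI)
qed

lemma gT_det: "det (matrix (gT' a b q v)) = (1 - v$2) * DD a b q"
  by (simp add: det_2 matrix_def gT'_def DD_def axis_def algebra_simps)


lemma coords_unique:
  assumes D: "DD a b q \<noteq> 0"
    and e: "al *\<^sub>R (b-a) + be *\<^sub>R (q-a) = al' *\<^sub>R (b-a) + be' *\<^sub>R (q-a)"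
  shows "al = al' \<and> be = be'"
proof -
  have e1: "(al-al')*(b-a)$1 + (be-be')*(q-a)$1 = 0" and e2: "(al-al')*(b-a)$2 + (be-be')*(q-a)$2 = 0"
    using e by (auto simp: vec_eq_iff forall_2 algebra_simps)
  have "(al-al') * DD a b q = (q-a)$2 * ((al-al')*(b-a)$1 + (be-be')*(q-a)$1) - (q-a)$1*((al-al')*(b-a)$2 + (be-be')*(q-a)$2)"
    by (simp add: DD_def algebra_simps)
  also have "\<dots> = 0" using e1 e2 by simp
  finally have 1: "al = al'" using D by simp
  have "(be-be') * DD a b q = (b-a)$1 * ((al-al')*(b-a)$2 + (be-be')*(q-a)$2) - (b-a)$2*((al-al')*(b-a)$1 + (be-be')*(q-a)$1)"
    by (simp add: DD_def algebra_simps)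
  also have "\<dots> = 0" using e1 e2 by simp
  finally have 2: "be = be'" using D by simp
  show ?thesis using 1 2 by simp
qed

lemma gT_alt: "gT a b q v = a + ((1 - v$2) * v$1) *\<^sub>R (b - a) + (v$2) *\<^sub>R (q - a)"
  by (simp add: gT_def algebra_simps)

definition Sq :: "(real^2) set" where "Sq = {v. 0 \<le> v$1 \<and> v$1 \<le> 1 \<and> 0 \<le> v$2 \<and> v$2 < 1}"

lemma gT_inj: assumes D: "DD a b q \<noteq> 0" shows "inj_on (gT a b q) Sq"
proof (rule inj_onI)
  fix v w assume v: "v \<in> Sq" and w: "w \<in> Sq" and e: "gT a b q v = gT a b q w"
  have "((1 - v$2) * v$1) *\<^sub>R (b - a) + (v$2) *\<^sub>R (q - a) = ((1 - w$2) * w$1) *\<^sub>R (b - a) + (w$2) *\<^sub>R (q - a)"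
    using e by (simp add: gT_alt)
  from coords_unique[OF D this] have 1: "(1 - v$2) * v$1 = (1 - w$2) * w$1" and 2: "v$2 = w$2" by auto
  have "v$2 < 1" using v by (simp add: Sq_def)
  with 1 2 have "v$1 = w$1" by simp
  with 2 show "v = w" by (simp add: vec_eq_iff forall_2)
qed

lemma gT_image_sub: "gT a b q ` Sq \<subseteq> convex hull {a, b, q}"
proof
  fix x assume "x \<in> gT a b q ` Sq"
  then obtain v where v: "v \<in> Sq" and x: "x = gT a b q v" by auto
  have "x = ((1 - v$2) * (1 - v$1)) *\<^sub>R a + ((1 - v$2) * v$1) *\<^sub>R b + (v$2) *\<^sub>R q"
    by (simp add: x gT_def algebra_simps)
  also have "\<dots> \<in> convex hull {a, b, q}"
  proof (rule in_hull3)
    have s: "0 \<le> v$1" "v$1 \<le> 1" "0 \<le> v$2" "v$2 < 1" using v by (auto simp: Sq_def)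
    show "0 \<le> (1 - v$2) * (1 - v$1)" using s by simp
    show "0 \<le> (1 - v$2) * v$1" using s by simp
    show "0 \<le> v$2" using s by simp
    show "(1 - v$2) * (1 - v$1) + (1 - v$2) * v$1 + v$2 = 1" by (simp add: algebra_simps)
  qed
  finally show "x \<in> convex hull {a, b, q}" .
qed

lemma gT_image_sup: "convex hull {a, b, q} \<subseteq> gT a b q ` Sq \<union> {q}"
proof
  fix x assume "x \<in> convex hull {a, b, q}"
  then obtain u v w where uvw: "0 \<le> u" "0 \<le> v" "0 \<le> w" "u + v + w = 1"
      and xe: "x = u *\<^sub>R a + v *\<^sub>R b + w *\<^sub>R q"
    unfolding convex_hull_3 by blast
  show "x \<in> gT a b q ` Sq \<union> {q}"
  proof (cases "w = 1")
    case True
    then have "u = 0" "v = 0" using uvw by auto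
    then show ?thesis using True xe by simp
  next
    case False
    then have w1: "w < 1" using uvw by auto
    define z :: "real^2" where "z = vector [v / (1 - w), w]"
    have z1: "z$1 = v / (1 - w)" and z2: "z$2 = w" by (simp_all add: z_def)
    have "z \<in> Sq" using uvw w1 by (simp add: Sq_def z1 z2 divide_simps)
    moreover have "gT a b q z = x"
    proof -
      have "gT a b q z = (1 - w) *\<^sub>R ((1 - v / (1 - w)) *\<^sub>R a + (v / (1 - w)) *\<^sub>R b) + w *\<^sub>R q"
        by (simp add: gT_def z1 z2)
      also have "\<dots> = ((1 - w) * (1 - v / (1 - w))) *\<^sub>R a + ((1 - w) * (v / (1 - w))) *\<^sub>R b + w *\<^sub>R q"
        by (simp add: scaleR_add_right)
      also have "(1 - w) * (1 - v / (1 - w)) = u"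
      proof -
        have "(1 - w) * (1 - v / (1 - w)) = (1 - w) - v" using w1 by (simp add: field_simps)
        also have "\<dots> = u" using uvw(4) by simp
        finally show ?thesis .
      qed
      also have "(1 - w) * (v / (1 - w)) = v" using w1 by simp
      finally show ?thesis using xe by simp
    qed
    ultimately show ?thesis by blast
  qed
qed

lemma Sq_lebesgue: "Sq \<in> sets lebesgue"
proof -
  have "Sq = {v. 0 \<le> v$1} \<inter> {v. v$1 \<le> 1} \<inter> {v. 0 \<le> v$2} \<inter> {v. v$2 < (1::real)}"
    by (auto simp: Sq_def)
  moreover have "... \<in> sets borel"
    by (intro sets.Int borel_closed borel_open closed_Collect_le open_Collect_less continuous_intros)
  ultimately show ?thesis by simp
qed

lemma Sq_cbox: "negligible (sym_diff Sq (cbox 0 1))"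
proof (rule negligible_subset[OF negligible_standard_hyperplane[of "axis 2 1" 1]])
  show "axis 2 1 \<in> (Basis :: (real^2) set)" by (auto simp: Basis_vec_def)
  show "sym_diff Sq (cbox 0 1) \<subseteq> {x::real^2. x \<bullet> axis 2 1 = 1}"
    by (auto simp: Sq_def mem_box_cart forall_2 inner_axis)
qed



lemma ftc_real:
  fixes F f :: "real \<Rightarrow> real"
  assumes "\<And>x. (F has_real_derivative f x) (at x)"
  shows "(f has_integral (F 1 - F 0)) {0..1}"
  by (rule fundamental_theorem_of_calculus) (auto intro: has_field_derivative_at_within assms simp: has_real_derivative_iff_has_vector_derivative[symmetric])

lemma int_1mt: "((\<lambda>t::real. 1 - t) has_integral 1/2) {0..1}"
proof -
  have "((\<lambda>t::real. 1 - t) has_integral ((\<lambda>t. t - t^2/2) 1 - (\<lambda>t. t - t^2/2) 0)) {0..1}"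
    by (rule ftc_real) (auto intro!: derivative_eq_intros)
  then show ?thesis by simp
qed

lemma int_1mt2: "((\<lambda>t::real. (1 - t)^2) has_integral 1/3) {0..1}"
proof -
  have "((\<lambda>t::real. (1 - t)^2) has_integral ((\<lambda>t. -((1-t)^3/3)) 1 - (\<lambda>t. -((1-t)^3/3)) 0)) {0..1}"
    by (rule ftc_real) (auto intro!: derivative_eq_intros simp: power2_eq_square power3_eq_cube field_simps)
  then show ?thesis by simp
qed

lemma int_t1mt: "((\<lambda>t::real. t * (1 - t)) has_integral 1/6) {0..1}"
proof -
  have "((\<lambda>t::real. t * (1 - t)) has_integral ((\<lambda>t. t^2/2 - t^3/3) 1 - (\<lambda>t. t^2/2 - t^3/3) 0)) {0..1}"
    by (rule ftc_real) (auto intro!: derivative_eq_intros simp: power2_eq_square power3_eq_cube algebra_simps)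
  then show ?thesis by simp
qed

lemma int_const01: "((\<lambda>t::real. c) has_integral c) {0..1}"
  using has_integral_const_real[of c 0 1] by simp

lemma sep_general:
  fixes \<alpha> \<beta> :: "real \<Rightarrow> real"
  assumes ca: "continuous_on {0..1} \<alpha>"
    and na: "\<And>u. u \<in> {0..1} \<Longrightarrow> 0 \<le> \<alpha> u"
    and ia: "(\<alpha> has_integral A) {0..1}"
    and mb: "(\<lambda>u. indicator {0..1} u * \<beta> u) \<in> borel_measurable borel"
    and M0: "0 \<le> M"
    and lb: "\<And>u. u \<in> {0..1} \<Longrightarrow> - M \<le> \<beta> u"
    and ib: "(\<beta> has_integral B) {0..1}"
  shows "((\<lambda>v::real^2. \<beta> (v$1) * \<alpha> (v$2)) has_integral (B * A)) (cbox 0 1)"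
proof -
  have ma: "(\<lambda>u. indicator {0..1} u * \<alpha> u) \<in> borel_measurable borel"
    using borel_measurable_continuous_on_indicator[OF _ ca] by simp
  have mbM: "(\<lambda>u. indicator {0..1} u * (\<beta> u + M)) \<in> borel_measurable borel"
  proof -
    have "(\<lambda>u. indicator {0..1} u * (\<beta> u + M)) = (\<lambda>u. indicator {0..1} u * \<beta> u + indicator {0..1} u * M)"
      by (simp add: fun_eq_iff algebra_simps)
    then show ?thesis using mb by simp
  qed
  have mM: "(\<lambda>u::real. indicator {0..1} u * (\<lambda>_. M) u) \<in> borel_measurable borel"
    using borel_measurable_continuous_on_indicator[OF _ continuous_on_const[of "{0..1::real}" M]] by simp
  have 1: "((\<lambda>v::real^2. (\<beta> (v$1) + M) * \<alpha> (v$2)) has_integral ((B + M) * A)) (cbox 0 1)"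
  proof (rule sep_integral_nonneg[OF ma mbM na])
    show "0 \<le> \<beta> u + M" if "u \<in> {0..1}" for u using lb[OF that] by simp
    show "(\<alpha> has_integral A) {0..1}" by (rule ia)
    show "((\<lambda>u. \<beta> u + M) has_integral B + M) {0..1}" by (rule has_integral_add[OF ib int_const01])
  qed
  have 2: "((\<lambda>v::real^2. (\<lambda>_. M) (v$1) * \<alpha> (v$2)) has_integral (M * A)) (cbox 0 1)"
    by (rule sep_integral_nonneg[OF ma mM na]) (use M0 int_const01 ia in auto)
  have "((\<lambda>v::real^2. (\<beta> (v$1) + M) * \<alpha> (v$2) - (\<lambda>_. M) (v$1) * \<alpha> (v$2)) has_integral ((B + M) * A - M * A)) (cbox 0 1)"
    by (rule has_integral_diff[OF 1 2])
  then show ?thesis by (simp add: algebra_simps)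
qed


lemma phi_convex:
  assumes cv: "convex_on (convex hull {a,b,q}) (f :: real^2 \<Rightarrow> real)"
  shows "convex_on {0..1} (\<lambda>u. f ((1-u) *\<^sub>R a + u *\<^sub>R b))"
  unfolding convex_on_def
proof (intro conjI ballI allI impI)
  show "convex {0..1::real}" by simp
  fix x y :: real and s t :: real
  assume x: "x \<in> {0..1}" and y: "y \<in> {0..1}" and st: "0 \<le> s" "0 \<le> t" "s + t = 1"
  have px: "(1-x) *\<^sub>R a + x *\<^sub>R b \<in> convex hull {a,b,q}"
    using in_hull3[of "1-x" x 0 a b q] x by auto
  have py: "(1-y) *\<^sub>R a + y *\<^sub>R b \<in> convex hull {a,b,q}"
    using in_hull3[of "1-y" y 0 a b q] y by auto
  have e: "(1 - (s * x + t * y)) *\<^sub>R a + (s * x + t * y) *\<^sub>R b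
      = s *\<^sub>R ((1-x) *\<^sub>R a + x *\<^sub>R b) + t *\<^sub>R ((1-y) *\<^sub>R a + y *\<^sub>R b)"
  proof -
    have t: "t = 1 - s" using st by simp
    show ?thesis unfolding t by (simp add: algebra_simps)
  qed
  show "f ((1 - (s *\<^sub>R x + t *\<^sub>R y)) *\<^sub>R a + (s *\<^sub>R x + t *\<^sub>R y) *\<^sub>R b)
        \<le> s * f ((1 - x) *\<^sub>R a + x *\<^sub>R b) + t * f ((1 - y) *\<^sub>R a + y *\<^sub>R b)"
    using convex_onD2[OF cv px py st] e by simp
qed

lemma phi_borel:
  fixes \<phi> :: "real \<Rightarrow> real"
  assumes cv: "convex_on {0..1} \<phi>"
  shows "(\<lambda>u. indicator {0..1} u * \<phi> u) \<in> borel_measurable borel"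
proof -
  have "convex_on {0<..<1} \<phi>" by (rule convex_on_subset[OF cv]) auto
  then have c: "continuous_on {0<..<1} \<phi>" by (simp add: convex_on_continuous)
  have m1: "(\<lambda>u. indicator {0<..<1} u * \<phi> u) \<in> borel_measurable borel"
    using borel_measurable_continuous_on_indicator[OF _ c] by simp
  have m2: "(\<lambda>u::real. indicator {0} u * \<phi> 0) \<in> borel_measurable borel"
    using borel_measurable_continuous_on_indicator[OF _ continuous_on_const[of "{0::real}" "\<phi> 0"]] by simp
  have m3: "(\<lambda>u::real. indicator {1} u * \<phi> 1) \<in> borel_measurable borel"
    using borel_measurable_continuous_on_indicator[OF _ continuous_on_const[of "{1::real}" "\<phi> 1"]] by simp
  have "(\<lambda>u. indicator {0..1} u * \<phi> u) = (\<lambda>u. indicator {0<..<1} u * \<phi> u + indicator {0} u * \<phi> 0 + indicator {1} u * \<phi> 1)"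
    by (auto simp: fun_eq_iff indicator_def)
  then show ?thesis using m1 m2 m3 by simp
qed


lemma tri_main:
  fixes f :: "real^2 \<Rightarrow> real"
  assumes cv: "convex_on (convex hull {a,b,q}) f" and D: "DD a b q \<noteq> 0"
  shows "f absolutely_integrable_on (convex hull {a,b,q})"
    and "measure lebesgue (convex hull {a,b,q}) = \<bar>DD a b q\<bar> / 2"
    and "integral (convex hull {a,b,q}) f \<le> measure lebesgue (convex hull {a,b,q}) * (1/3 * f q + 2/3 * avg_segment f a b)"
proof -
  define T where "T = convex hull {a,b,q}"
  define \<phi> where "\<phi> = (\<lambda>u. f ((1-u) *\<^sub>R a + u *\<^sub>R b))"
  define G where "G = gT a b q ` Sq"
  have cT: "compact T" unfolding T_def by (simp add: compact_convex_hull)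
  obtain M where bd: "\<forall>x\<in>T. \<bar>f x\<bar> \<le> M" using tri_bound[OF cv] unfolding T_def by blast
  have M0: "0 \<le> M" using bd hull_subset[of "{a,b,q}" convex] unfolding T_def by force
  have fT: "f absolutely_integrable_on T"
    using convex_abs_int[OF cv[folded T_def] cT] bd by blast
  then show "f absolutely_integrable_on (convex hull {a,b,q})" by (simp add: T_def)
  have GT: "G \<subseteq> T" "T \<subseteq> G \<union> {q}" using gT_image_sub gT_image_sup unfolding G_def T_def by auto
  have spk: "negligible {x \<in> T - G. h x \<noteq> 0}" "negligible {x \<in> G - T. h x \<noteq> 0}" for h :: "real^2 \<Rightarrow> real"
    using GT by (auto intro: negligible_subset[OF negligible_sing[of q]])
  have fG: "f absolutely_integrable_on G" using fT absolutely_integrable_spike_set_eq[OF spk] by blast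
  have intTG: "integral T h = integral G h" for h :: "real^2 \<Rightarrow> real"
    by (rule integral_spike_set[OF spk])
  define H where "H = (\<lambda>v. \<bar>det (matrix (gT' a b q v))\<bar> * f (gT a b q v))"
  have cov: "H absolutely_integrable_on Sq" "integral G f = integral Sq H"
    using cov_real[OF Sq_lebesgue gT_deriv gT_inj[OF D], of f] fG unfolding G_def H_def by auto
  have oneT: "(\<lambda>x. 1::real) absolutely_integrable_on T"
    by (rule convex_abs_int[of T "\<lambda>x. 1" 1]) (use cT cv in \<open>auto simp: T_def convex_on_def\<close>)
  have oneG: "(\<lambda>x. 1::real) absolutely_integrable_on G" using oneT absolutely_integrable_spike_set_eq[OF spk] by blast
  have cov1: "integral G (\<lambda>x. 1::real) = integral Sq (\<lambda>v. \<bar>det (matrix (gT' a b q v))\<bar> * 1)"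
    using cov_real[OF Sq_lebesgue gT_deriv gT_inj[OF D], of "\<lambda>x. 1"] oneG unfolding G_def by auto
  have detSq: "\<bar>det (matrix (gT' a b q v))\<bar> = \<bar>DD a b q\<bar> * (1 - v$2)" if "v \<in> Sq" for v
    using that by (simp add: gT_det abs_mult Sq_def)
  have sq_int: "(h has_integral I) Sq" if "(h has_integral I) (cbox 0 1)" for h :: "real^2 \<Rightarrow> real" and I
  proof -
    have "negligible {x \<in> Sq - cbox 0 1. h x \<noteq> 0}" "negligible {x \<in> cbox 0 1 - Sq. h x \<noteq> 0}"
      by (auto intro: negligible_subset[OF Sq_cbox])
    then show ?thesis using that has_integral_spike_set_eq by blast
  qed
  have i1: "((\<lambda>v::real^2. (\<lambda>_. 1) (v$1) * (1 - v$2)) has_integral (1 * (1/2))) (cbox 0 1)"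
  proof (rule sep_general[OF _ _ int_1mt _ _ _ int_const01, where M=1])
    show "continuous_on {0..1} (\<lambda>t::real. 1 - t)" by (intro continuous_intros)
    show "0 \<le> 1 - u" if "u \<in> {0..1}" for u :: real using that by simp
    show "(\<lambda>u::real. indicator {0..1} u * (1::real)) \<in> borel_measurable borel"
      using borel_measurable_continuous_on_indicator[OF _ continuous_on_const[of "{0..1::real}" "1::real"]] by simp
  qed auto
  have "integral Sq (\<lambda>v. \<bar>det (matrix (gT' a b q v))\<bar> * 1) = integral Sq (\<lambda>v. \<bar>DD a b q\<bar> * ((\<lambda>_. 1) (v$1) * (1 - v$2)))"
    by (rule integral_cong) (simp add: detSq)
  also have "\<dots> = \<bar>DD a b q\<bar> * (1/2)"
    using integral_unique[OF has_integral_mult_right[OF sq_int[OF i1], of "\<bar>DD a b q\<bar>"]] by simp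
  finally have mT: "measure lebesgue T = \<bar>DD a b q\<bar> / 2"
    using lmeasure_integral[of T] cT intTG cov1 by (simp add: lmeasurable_compact)
  then show "measure lebesgue (convex hull {a,b,q}) = \<bar>DD a b q\<bar> / 2" by (simp add: T_def)
  have cphi: "convex_on {0..1} \<phi>" unfolding \<phi>_def by (rule phi_convex[OF cv])
  have phiT: "(1-u) *\<^sub>R a + u *\<^sub>R b \<in> T" if "u \<in> {0..1}" for u
    using in_hull3[of "1-u" u 0 a b q] that unfolding T_def by auto
  have qT: "q \<in> T" unfolding T_def by (simp add: hull_inc)
  have phibd: "\<bar>\<phi> u\<bar> \<le> M" if "u \<in> {0..1}" for u using bd phiT[OF that] by (simp add: \<phi>_def)
  have phiint: "\<phi> absolutely_integrable_on {0..1}"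
    by (rule convex_abs_int[OF cphi]) (use phibd in auto)
  define I\<phi> where "I\<phi> = integral {0..1} \<phi>"
  have phihas: "(\<phi> has_integral I\<phi>) {0..1}" unfolding I\<phi>_def
    using phiint by (simp add: absolutely_integrable_on_def has_integral_integral)
  have i2: "((\<lambda>v::real^2. \<phi> (v$1) * (1 - v$2)^2) has_integral (I\<phi> * (1/3))) (cbox 0 1)"
  proof (rule sep_general[OF _ _ int_1mt2 phi_borel[OF cphi] M0 _ phihas])
    show "continuous_on {0..1} (\<lambda>t::real. (1 - t)^2)" by (intro continuous_intros)
    show "0 \<le> (1 - u)^2" for u :: real by simp
    show "- M \<le> \<phi> u" if "u \<in> {0..1}" for u using phibd[OF that] by simp
  qed
  have i3: "((\<lambda>v::real^2. (\<lambda>_. f q) (v$1) * (v$2 * (1 - v$2))) has_integral (f q * (1/6))) (cbox 0 1)"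
  proof (rule sep_general[OF _ _ int_t1mt _ _ _ int_const01, where M="\<bar>f q\<bar>"])
    show "continuous_on {0..1} (\<lambda>t::real. t * (1 - t))" by (intro continuous_intros)
    show "0 \<le> u * (1 - u)" if "u \<in> {0..1}" for u :: real using that by simp
    show "(\<lambda>u::real. indicator {0..1} u * f q) \<in> borel_measurable borel"
      using borel_measurable_continuous_on_indicator[OF _ continuous_on_const[of "{0..1::real}" "f q"]] by simp
  qed auto
  define R where "R = (\<lambda>v::real^2. \<bar>DD a b q\<bar> * (\<phi> (v$1) * (1 - v$2)^2 + f q * (v$2 * (1 - v$2))))"
  have i23: "((\<lambda>v::real^2. \<phi> (v$1) * (1 - v$2)^2 + f q * (v$2 * (1 - v$2))) has_integral (I\<phi> * (1/3) + f q * (1/6))) (cbox 0 1)"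
    using has_integral_add[OF i2 i3] by simp
  have Rhas: "(R has_integral (\<bar>DD a b q\<bar> * (I\<phi> * (1/3) + f q * (1/6)))) Sq"
    using has_integral_mult_right[OF sq_int[OF i23], of "\<bar>DD a b q\<bar>"] unfolding R_def by simp
  have HR: "H v \<le> R v" if v: "v \<in> Sq" for v
  proof -
    have s: "0 \<le> v$1" "v$1 \<le> 1" "0 \<le> v$2" "v$2 < 1" using v by (auto simp: Sq_def)
    have "f (gT a b q v) \<le> (1 - v$2) * \<phi> (v$1) + v$2 * f q"
      using convex_onD2[OF cv[folded T_def] phiT[of "v$1"] qT, of "1 - v$2" "v$2"] s
      by (simp add: gT_def \<phi>_def)
    then have "(1 - v$2) * f (gT a b q v) \<le> (1 - v$2) * ((1 - v$2) * \<phi> (v$1) + v$2 * f q)"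
      by (rule mult_left_mono) (use s in simp)
    then have "\<bar>DD a b q\<bar> * ((1 - v$2) * f (gT a b q v)) \<le> \<bar>DD a b q\<bar> * ((1 - v$2) * ((1 - v$2) * \<phi> (v$1) + v$2 * f q))"
      by (rule mult_left_mono) simp
    moreover have "H v = \<bar>DD a b q\<bar> * ((1 - v$2) * f (gT a b q v))"
      using detSq[OF v] by (simp add: H_def)
    moreover have "R v = \<bar>DD a b q\<bar> * ((1 - v$2) * ((1 - v$2) * \<phi> (v$1) + v$2 * f q))"
      by (simp add: R_def power2_eq_square algebra_simps)
    ultimately show ?thesis by simp
  qed
  have "integral Sq H \<le> integral Sq R"
    by (rule integral_le[OF _ has_integral_integrable[OF Rhas] HR]) (use cov(1) in \<open>simp add: absolutely_integrable_on_def\<close>)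
  then have "integral T f \<le> \<bar>DD a b q\<bar> * (I\<phi> * (1/3) + f q * (1/6))"
    using intTG cov(2) integral_unique[OF Rhas] by simp
  moreover have "avg_segment f a b = I\<phi>" by (simp add: avg_segment_def I\<phi>_def \<phi>_def)
  ultimately show "integral (convex hull {a,b,q}) f \<le> measure lebesgue (convex hull {a,b,q}) * (1/3 * f q + 2/3 * avg_segment f a b)"
  proof -
    assume a1: "integral T f \<le> \<bar>DD a b q\<bar> * (I\<phi> * (1/3) + f q * (1/6))" and a2: "avg_segment f a b = I\<phi>"
    have "measure lebesgue (convex hull {a,b,q}) * (1/3 * f q + 2/3 * avg_segment f a b) = \<bar>DD a b q\<bar> * (I\<phi> * (1/3) + f q * (1/6))"
      by (simp only: mT[unfolded T_def] a2) (simp add: algebra_simps)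
    then show ?thesis using a1 unfolding T_def by simp
  qed
qed


lemma pp_start: "ps \<noteq> [] \<Longrightarrow> pathstart (polygonal_path ps) = hd ps"
  by (induction ps rule: polygonal_path.induct) (auto simp: pathstart_join)

lemma pp_finish: "ps \<noteq> [] \<Longrightarrow> pathfinish (polygonal_path ps) = last ps"
  by (induction ps rule: polygonal_path.induct) (auto simp: pathfinish_join)

lemma path_constfun: "path (\<lambda>a::real. p)"
  by (simp add: path_def)

lemma pp_path: "path (polygonal_path ps)"
  by (induction ps rule: polygonal_path.induct) (auto simp: pp_start pp_finish path_constfun)

lemma pp_image:
  "2 \<le> length ps \<Longrightarrow> path_image (polygonal_path ps) = (\<Union>i<length ps - 1. closed_segment (ps!i) (ps!Suc i))"
proof (induction ps rule: polygonal_path.induct)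
  case (4 p q r ps)
  have "path_image (polygonal_path (p # q # r # ps)) = closed_segment p q \<union> path_image (polygonal_path (q # r # ps))"
    by (simp add: path_image_join pp_start)
  also have "path_image (polygonal_path (q # r # ps)) = (\<Union>i<length (q#r#ps) - 1. closed_segment ((q#r#ps)!i) ((q#r#ps)!Suc i))"
    using 4 by simp
  also have "closed_segment p q \<union> \<dots> = (\<Union>i<length (p#q#r#ps) - 1. closed_segment ((p#q#r#ps)!i) ((p#q#r#ps)!Suc i))"
  proof -
    have "{..<length (p#q#r#ps) - 1} = insert 0 (Suc ` {..<length (q#r#ps) - 1})"
      by (simp add: lessThan_Suc_eq_insert_0)
    then show ?thesis by simp
  qed
  finally show ?case .
qed (simp_all add: lessThan_Suc)

fun tau :: "nat \<Rightarrow> nat \<Rightarrow> real \<Rightarrow> real" where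
  "tau 0 i u = u"
| "tau (Suc m) 0 u = u / 2"
| "tau (Suc m) (Suc i) u = 1/2 + tau m i u / 2"

lemma tau_range: "0 < u \<Longrightarrow> u < 1 \<Longrightarrow> 0 < tau m i u \<and> tau m i u < 1"
  by (induction m i u rule: tau.induct) auto

lemma tau_mono: "i < j \<Longrightarrow> j \<le> m \<Longrightarrow> 0 < u \<Longrightarrow> u < 1 \<Longrightarrow> 0 < u' \<Longrightarrow> u' < 1 \<Longrightarrow> tau m i u < tau m j u'"
proof (induction m arbitrary: i j)
  case 0 then show ?case by simp
next
  case (Suc m)
  show ?case
  proof (cases i)
    case 0
    then obtain j' where j: "j = Suc j'" using Suc by (cases j) auto
    show ?thesis using 0 j tau_range[of u' m j'] Suc by simp
  next
    case (Suc i')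
    then obtain j' where j: "j = Suc j'" using Suc.prems by (cases j) auto
    have "tau m i' u < tau m j' u'" using Suc.IH[of i' j'] Suc.prems Suc j by simp
    then show ?thesis using Suc j by simp
  qed
qed

lemma pp_tau:
  "length ps = m + 2 \<Longrightarrow> i \<le> m \<Longrightarrow> 0 < u \<Longrightarrow> u < 1 \<Longrightarrow>
   polygonal_path ps (tau m i u) = (1 - u) *\<^sub>R ps!i + u *\<^sub>R ps!Suc i"
proof (induction m arbitrary: ps i)
  case 0
  then obtain p q where ps: "ps = [p, q]"
    by (cases ps; cases "tl ps") auto
  then show ?case using 0 by (simp add: linepath_def)
next
  case (Suc m)
  then obtain p q r rest where ps: "ps = p # q # r # rest"
    by (cases ps; cases "tl ps"; cases "tl (tl ps)") auto
  show ?case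
  proof (cases i)
    case 0
    then show ?thesis using ps Suc.prems by (simp add: joinpaths_def linepath_def)
  next
    case (Suc i')
    have r: "0 < tau m i' u" "tau m i' u < 1" using tau_range Suc.prems by auto
    have "polygonal_path (q # r # rest) (tau m i' u) = (1 - u) *\<^sub>R (q#r#rest)!i' + u *\<^sub>R (q#r#rest)!Suc i'"
      using Suc.IH[of "q#r#rest" i'] Suc.prems ps Suc by simp
    moreover have "2 * (1 / 2 + tau m i' u / 2) - 1 = tau m i' u" by simp
    ultimately show ?thesis using ps Suc r by (simp add: joinpaths_def)
  qed
qed


lemma ps_len: "length (map A [0..<n] @ [A 0]) = n + 1" by simp

lemma ps_nth: "i < n \<Longrightarrow> (map A [0..<n] @ [A 0]) ! i = A i"
  by (simp add: nth_append)

lemma ps_nth_Suc: "i < n \<Longrightarrow> (map A [0..<n] @ [A 0]) ! Suc i = A (Suc i mod n)"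
proof -
  assume i: "i < n"
  show ?thesis
  proof (cases "Suc i < n")
    case True then show ?thesis by (simp add: nth_append)
  next
    case False then have "Suc i = n" using i by simp
    then show ?thesis by (simp add: nth_append)
  qed
qed

lemma poly_image:
  assumes "1 \<le> n"
  shows "path_image (polygon_boundary n A) = (\<Union>k<n. closed_segment (A k) (A (Suc k mod n)))"
proof -
  have "path_image (polygon_boundary n A) = (\<Union>i<length (map A [0..<n] @ [A 0]) - 1.
      closed_segment ((map A [0..<n] @ [A 0])!i) ((map A [0..<n] @ [A 0])!Suc i))"
    unfolding polygon_boundary_def using assms by (intro pp_image) simp
  also have "\<dots> = (\<Union>k<n. closed_segment (A k) (A (Suc k mod n)))"
    by (intro SUP_cong) (auto simp: ps_nth ps_nth_Suc)
  finally show ?thesis .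
qed

lemma poly_loop: "pathfinish (polygon_boundary n A) = pathstart (polygon_boundary n A)"
proof -
  have "hd (map A [0..<n] @ [A 0]) = A 0"
  proof (cases "n = 0")
    case True then show ?thesis by simp
  next
    case False
    then have "hd (map A [0..<n] @ [A 0]) = (map A [0..<n] @ [A 0]) ! 0" by (simp add: hd_conv_nth)
    also have "\<dots> = A 0" using False ps_nth[of 0 n A] by simp
    finally show ?thesis .
  qed
  then show ?thesis unfolding polygon_boundary_def by (simp add: pp_start pp_finish)
qed

lemma poly_path: "path (polygon_boundary n A)"
  unfolding polygon_boundary_def by (rule pp_path)

lemma open_edges_disjoint:
  assumes sp: "simple_path (polygon_boundary n A)" and ij: "i < j" "j < n"
    and u: "0 < u" "u < 1" and u': "0 < u'" "u' < 1"
  shows "(1 - u) *\<^sub>R A i + u *\<^sub>R A (Suc i mod n) \<noteq> (1 - u') *\<^sub>R A j + u' *\<^sub>R A (Suc j mod n)"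
proof
  assume eq: "(1 - u) *\<^sub>R A i + u *\<^sub>R A (Suc i mod n) = (1 - u') *\<^sub>R A j + u' *\<^sub>R A (Suc j mod n)"
  define m where "m = n - 1"
  have len: "length (map A [0..<n] @ [A 0]) = m + 2" using ij by (simp add: m_def)
  have im: "i \<le> m" "j \<le> m" using ij by (auto simp: m_def)
  define t where "t = tau m i u"
  define t' where "t' = tau m j u'"
  have tt: "t < t'" unfolding t_def t'_def by (rule tau_mono) (use ij im u u' in auto)
  have r: "0 < t" "t < 1" "0 < t'" "t' < 1" using tau_range u u' unfolding t_def t'_def by auto
  have "polygon_boundary n A t = (1 - u) *\<^sub>R A i + u *\<^sub>R A (Suc i mod n)"
    unfolding polygon_boundary_def t_def using pp_tau[OF len im(1) u] ij by (simp add: ps_nth ps_nth_Suc)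
  moreover have "polygon_boundary n A t' = (1 - u') *\<^sub>R A j + u' *\<^sub>R A (Suc j mod n)"
    unfolding polygon_boundary_def t'_def using pp_tau[OF len im(2) u'] ij by (simp add: ps_nth ps_nth_Suc)
  ultimately have "polygon_boundary n A t = polygon_boundary n A t'" using eq by simp
  then show False using sp r tt unfolding simple_path_def loop_free_def by force
qed


lemma jordan_facts:
  fixes g :: "real \<Rightarrow> real^2"
  assumes sp: "simple_path g" and lp: "pathfinish g = pathstart g"
  shows "frontier (outside (path_image g)) = path_image g" and "inside (path_image g) \<noteq> {}"
proof -
  define S where "S = path_image g"
  have cS: "compact S" unfolding S_def using sp by (simp add: compact_path_image simple_path_imp_path)
  then have bS: "bounded S" by (rule compact_imp_bounded)
  have h1: "S homeomorphic sphere (0::complex) 1"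
    unfolding S_def by (rule homeomorphic_simple_path_image_circle[OF sp lp]) simp
  have h2: "sphere (0::complex) 1 homeomorphic sphere (0::real^2) 1"
    by (rule homeomorphic_spheres_gen) auto
  have h: "S homeomorphic sphere (0::real^2) 1" using homeomorphic_trans[OF h1 h2] .
  have dim: "2 \<le> DIM(real^2)" by simp
  have co: "connected (outside S)" by (rule connected_outside[OF bS dim])
  have ne: "outside S \<noteq> {}" by (rule outside_bounded_nonempty[OF bS])
  have comp: "outside S \<in> components (- S)" using co ne by (simp add: outside_in_components)
  show "frontier (outside (path_image g)) = path_image g"
    using Jordan_Brouwer_frontier[OF h comp dim] by (simp add: S_def)
  show "inside (path_image g) \<noteq> {}"
  proof
    assume "inside (path_image g) = {}"
    then have "- S = outside S" using inside_Un_outside[of S] by (simp add: S_def)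
    then have "connected (- S)" using co by simp
    moreover have "\<not> connected (- S)" by (rule Jordan_Brouwer_separation[OF h]) simp
    ultimately show False by simp
  qed
qed


definition bb :: "real^2 \<Rightarrow> real^2 \<Rightarrow> real^2 \<Rightarrow> real^2 \<Rightarrow> real" where
  "bb c p q x = ((x-c)$1*(q-c)$2 - (x-c)$2*(q-c)$1) / DD c p q"
definition bg :: "real^2 \<Rightarrow> real^2 \<Rightarrow> real^2 \<Rightarrow> real^2 \<Rightarrow> real" where
  "bg c p q x = ((p-c)$1*(x-c)$2 - (p-c)$2*(x-c)$1) / DD c p q"

lemma cramer2:
  fixes P1 P2 Q1 Q2 X1 X2 D :: real
  assumes "D = P1*Q2 - P2*Q1" "D \<noteq> 0"
  shows "(X1*Q2 - X2*Q1)/D * P1 + (P1*X2 - P2*X1)/D * Q1 = X1"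
    and "(X1*Q2 - X2*Q1)/D * P2 + (P1*X2 - P2*X1)/D * Q2 = X2"
proof -
  have n1: "(X1*Q2 - X2*Q1) * P1 + (P1*X2 - P2*X1) * Q1 = X1 * D" by (simp add: assms(1) algebra_simps)
  have n2: "(X1*Q2 - X2*Q1) * P2 + (P1*X2 - P2*X1) * Q2 = X2 * D" by (simp add: assms(1) algebra_simps)
  have "(X1*Q2 - X2*Q1)/D * P1 + (P1*X2 - P2*X1)/D * Q1 = ((X1*Q2 - X2*Q1) * P1 + (P1*X2 - P2*X1) * Q1) / D"
    by (simp add: add_divide_distrib)
  also have "\<dots> = X1" using n1 assms(2) by simp
  finally show "(X1*Q2 - X2*Q1)/D * P1 + (P1*X2 - P2*X1)/D * Q1 = X1" .
  have "(X1*Q2 - X2*Q1)/D * P2 + (P1*X2 - P2*X1)/D * Q2 = ((X1*Q2 - X2*Q1) * P2 + (P1*X2 - P2*X1) * Q2) / D"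
    by (simp add: add_divide_distrib)
  also have "\<dots> = X2" using n2 assms(2) by simp
  finally show "(X1*Q2 - X2*Q1)/D * P2 + (P1*X2 - P2*X1)/D * Q2 = X2" .
qed

lemma bary_decomp:
  assumes D: "DD c p q \<noteq> 0"
  shows "x = c + bb c p q x *\<^sub>R (p - c) + bg c p q x *\<^sub>R (q - c)"
proof -
  have d: "DD c p q = (p-c)$1*(q-c)$2 - (p-c)$2*(q-c)$1" by (simp add: DD_def)
  have "x - c = bb c p q x *\<^sub>R (p - c) + bg c p q x *\<^sub>R (q - c)"
    unfolding vec_eq_iff forall_2 bb_def bg_def
    using cramer2[OF d D, of "(x-c)$1" "(x-c)$2"]
    by (simp only: vector_add_component vector_scaleR_component) simp
  then show ?thesis by (simp add: algebra_simps)
qed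

lemma bary_of:
  assumes D: "DD c p q \<noteq> 0"
  shows "bb c p q (c + be *\<^sub>R (p - c) + ga *\<^sub>R (q - c)) = be"
    and "bg c p q (c + be *\<^sub>R (p - c) + ga *\<^sub>R (q - c)) = ga"
  using D unfolding bb_def bg_def
  by (simp_all add: DD_def field_simps)

lemma hull_char:
  assumes D: "DD c p q \<noteq> 0"
  shows "x \<in> convex hull {c,p,q} \<longleftrightarrow> 0 \<le> bb c p q x \<and> 0 \<le> bg c p q x \<and> bb c p q x + bg c p q x \<le> 1"
proof
  assume "x \<in> convex hull {c,p,q}"
  then obtain u v w where uvw: "0 \<le> u" "0 \<le> v" "0 \<le> w" "u + v + w = 1"
      and xe: "x = u *\<^sub>R c + v *\<^sub>R p + w *\<^sub>R q"
    unfolding convex_hull_3 by blast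
  have "x = c + v *\<^sub>R (p - c) + w *\<^sub>R (q - c)"
  proof -
    have u: "u = 1 - v - w" using uvw(4) by simp
    show ?thesis unfolding xe u by (simp add: algebra_simps)
  qed
  then show "0 \<le> bb c p q x \<and> 0 \<le> bg c p q x \<and> bb c p q x + bg c p q x \<le> 1"
    using bary_of[OF D, of v w] uvw by auto
next
  assume h: "0 \<le> bb c p q x \<and> 0 \<le> bg c p q x \<and> bb c p q x + bg c p q x \<le> 1"
  have "x = (1 - bb c p q x - bg c p q x) *\<^sub>R c + bb c p q x *\<^sub>R p + bg c p q x *\<^sub>R q"
    using bary_decomp[OF D, of x] by (simp add: algebra_simps)
  also have "\<dots> \<in> convex hull {c,p,q}" using h by (intro in_hull3) auto
  finally show "x \<in> convex hull {c,p,q}" .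
qed

lemma bary_shift:
  assumes D: "DD c p q \<noteq> 0"
  shows "bb c p q (x + s *\<^sub>R (p - c)) = bb c p q x + s" "bg c p q (x + s *\<^sub>R (p - c)) = bg c p q x"
    "bb c p q (x + s *\<^sub>R (q - c)) = bb c p q x" "bg c p q (x + s *\<^sub>R (q - c)) = bg c p q x + s"
    "bb c p q (c + s *\<^sub>R (x - c)) = s * bb c p q x" "bg c p q (c + s *\<^sub>R (x - c)) = s * bg c p q x"
proof -
  let ?b = "bb c p q x" and ?g = "bg c p q x"
  have x: "x = c + ?b *\<^sub>R (p - c) + ?g *\<^sub>R (q - c)" by (rule bary_decomp[OF D])
  have e1: "x + s *\<^sub>R (p - c) = c + (?b + s) *\<^sub>R (p - c) + ?g *\<^sub>R (q - c)"
    by (subst x) (simp add: algebra_simps)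
  show "bb c p q (x + s *\<^sub>R (p - c)) = ?b + s" unfolding e1 by (rule bary_of[OF D])
  show "bg c p q (x + s *\<^sub>R (p - c)) = ?g" unfolding e1 by (rule bary_of[OF D])
  have e2: "x + s *\<^sub>R (q - c) = c + ?b *\<^sub>R (p - c) + (?g + s) *\<^sub>R (q - c)"
    by (subst x) (simp add: algebra_simps)
  show "bb c p q (x + s *\<^sub>R (q - c)) = ?b" unfolding e2 by (rule bary_of[OF D])
  show "bg c p q (x + s *\<^sub>R (q - c)) = ?g + s" unfolding e2 by (rule bary_of[OF D])
  have e: "c + s *\<^sub>R (x - c) = c + (s * ?b) *\<^sub>R (p - c) + (s * ?g) *\<^sub>R (q - c)"
    by (subst x) (simp add: algebra_simps)
  show "bb c p q (c + s *\<^sub>R (x - c)) = s * ?b" unfolding e by (rule bary_of[OF D])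
  show "bg c p q (c + s *\<^sub>R (x - c)) = s * ?g" unfolding e by (rule bary_of[OF D])
qed

lemma DD_nz_pc: "DD c p q \<noteq> 0 \<Longrightarrow> p - c \<noteq> 0" by (auto simp: DD_def)
lemma DD_nz_qc: "DD c p q \<noteq> 0 \<Longrightarrow> q - c \<noteq> 0" by (auto simp: DD_def)

lemma interior_pos:
  assumes D: "DD c p q \<noteq> 0" and x: "x \<in> interior (convex hull {c,p,q})"
  shows "0 < bb c p q x \<and> 0 < bg c p q x \<and> bb c p q x + bg c p q x < 1"
proof -
  obtain e where e: "0 < e" "ball x e \<subseteq> convex hull {c,p,q}"
    using x unfolding mem_interior by blast
  have inb: "x + t *\<^sub>R v \<in> convex hull {c,p,q}" if "v \<noteq> 0" "\<bar>t\<bar> = e / (2 * norm v)" for v t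
  proof -
    have "dist x (x + t *\<^sub>R v) = \<bar>t\<bar> * norm v" by (simp add: dist_norm)
    also have "\<dots> = e / 2" using that by simp
    finally have "x + t *\<^sub>R v \<in> ball x e" using e by simp
    then show ?thesis using e by blast
  qed
  define d1 where "d1 = e / (2 * norm (p - c))"
  define d2 where "d2 = e / (2 * norm (q - c))"
  have d1: "0 < d1" using e DD_nz_pc[OF D] by (simp add: d1_def)
  have d2: "0 < d2" using e DD_nz_qc[OF D] by (simp add: d2_def)
  have "x + (-d1) *\<^sub>R (p - c) \<in> convex hull {c,p,q}"
    by (rule inb[OF DD_nz_pc[OF D]]) (use d1 e(1) in \<open>simp add: d1_def\<close>)
  then have "0 \<le> bb c p q (x + (-d1) *\<^sub>R (p - c))" using hull_char[OF D] by blast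
  then have 1: "0 < bb c p q x" using bary_shift(1)[OF D, of x "-d1"] d1 by simp
  have "x + (-d2) *\<^sub>R (q - c) \<in> convex hull {c,p,q}"
    by (rule inb[OF DD_nz_qc[OF D]]) (use d2 e(1) in \<open>simp add: d2_def\<close>)
  then have "0 \<le> bg c p q (x + (-d2) *\<^sub>R (q - c))" using hull_char[OF D] by blast
  then have 2: "0 < bg c p q x" using bary_shift(4)[OF D, of x "-d2"] d2 by simp
  have "x + d1 *\<^sub>R (p - c) \<in> convex hull {c,p,q}"
    by (rule inb[OF DD_nz_pc[OF D]]) (use d1 e(1) in \<open>simp add: d1_def\<close>)
  then have "bb c p q (x + d1 *\<^sub>R (p - c)) + bg c p q (x + d1 *\<^sub>R (p - c)) \<le> 1" using hull_char[OF D] by blast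
  then have 3: "bb c p q x + bg c p q x < 1" using bary_shift(1,2)[OF D, of x d1] d1 by simp
  show ?thesis using 1 2 3 by simp
qed

lemma pos_interior:
  assumes D: "DD c p q \<noteq> 0" and h: "0 < bb c p q x" "0 < bg c p q x" "bb c p q x + bg c p q x < 1"
  shows "x \<in> interior (convex hull {c,p,q})"
proof -
  define Op where "Op = {x. 0 < bb c p q x \<and> 0 < bg c p q x \<and> bb c p q x + bg c p q x < 1}"
  have cb1: "continuous_on UNIV (\<lambda>x. bb c p q x)"
    unfolding bb_def by (intro continuous_on_divide continuous_intros) (use D in auto)
  have cb2: "continuous_on UNIV (\<lambda>x. bg c p q x)"
    unfolding bg_def by (intro continuous_on_divide continuous_intros) (use D in auto)
  have o: "open Op" unfolding Op_def
    by (intro open_Collect_conj open_Collect_less continuous_on_add continuous_on_const cb1 cb2)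
  have s: "Op \<subseteq> convex hull {c,p,q}"
  proof
    fix y assume "y \<in> Op" then show "y \<in> convex hull {c,p,q}" using hull_char[OF D, of y] by (simp add: Op_def)
  qed
  have "x \<in> Op" using h by (simp add: Op_def)
  then show ?thesis using interior_maximal[OF s o] by blast
qed


lemma hull3_segments: "convex hull {c, a, b} = (\<Union>y\<in>closed_segment a b. closed_segment c y)"
  by (subst convex_hull_insert_segments) (simp only: segment_convex_hull[symmetric] insert_not_empty if_False)

lemma seg_sub_hull3: "closed_segment a b \<subseteq> convex hull {c, a, b}"
  unfolding segment_convex_hull by (rule hull_mono) blast

lemma tri_sub_region:
  assumes kc: "c \<in> kernel (polygon_region n A)" and n: "1 \<le> n" and k: "k < n"
  shows "convex hull {c, A k, A (Suc k mod n)} \<subseteq> polygon_region n A"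
proof
  fix x assume "x \<in> convex hull {c, A k, A (Suc k mod n)}"
  then obtain y where y: "y \<in> closed_segment (A k) (A (Suc k mod n))" and x: "x \<in> closed_segment c y"
    unfolding hull3_segments by blast
  have "y \<in> path_image (polygon_boundary n A)" using y k poly_image[OF n] by blast
  then have "y \<in> polygon_region n A" by (simp add: polygon_region_def)
  then have "closed_segment c y \<subseteq> polygon_region n A" using kc by (simp add: kernel_def)
  then show "x \<in> polygon_region n A" using x by blast
qed

lemma ray_unbounded:
  fixes c x :: "real^2"
  assumes "x \<noteq> c"
  shows "\<not> bounded ((\<lambda>s. c + s *\<^sub>R (x - c)) ` {1..})"
proof
  assume "bounded ((\<lambda>s. c + s *\<^sub>R (x - c)) ` {1..})"
  then obtain B where B: "\<And>s. s \<ge> 1 \<Longrightarrow> norm (c + s *\<^sub>R (x - c)) \<le> B"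
    unfolding bounded_iff by auto
  have nx: "0 < norm (x - c)" using assms by simp
  define s where "s = (\<bar>B\<bar> + norm c + 1) / norm (x - c) + 1"
  have s1: "s \<ge> 1" using nx by (simp add: s_def)
  have "s * norm (x - c) \<ge> \<bar>B\<bar> + norm c + 1"
    using nx by (simp add: s_def field_simps)
  moreover have "norm (s *\<^sub>R (x - c)) \<le> norm (c + s *\<^sub>R (x - c)) + norm c"
    using norm_triangle_ineq4[of "c + s *\<^sub>R (x - c)" c] by simp
  ultimately have "norm (c + s *\<^sub>R (x - c)) > B" using s1 by simp
  then show False using B[OF s1] by simp
qed

lemma region_sub_tris:
  assumes n: "1 \<le> n"
  shows "polygon_region n A \<subseteq> (\<Union>k<n. convex hull {c, A k, A (Suc k mod n)})"
proof
  fix x assume xP: "x \<in> polygon_region n A"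
  define S where "S = path_image (polygon_boundary n A)"
  have SE: "S = (\<Union>k<n. closed_segment (A k) (A (Suc k mod n)))" unfolding S_def by (rule poly_image[OF n])
  show "x \<in> (\<Union>k<n. convex hull {c, A k, A (Suc k mod n)})"
  proof (cases "x \<in> S")
    case True
    then have "x \<in> (\<Union>k<n. closed_segment (A k) (A (Suc k mod n)))" using SE by simp
    then obtain k where k: "k < n" "x \<in> closed_segment (A k) (A (Suc k mod n))" by (elim UN_E) simp
    then have "x \<in> convex hull {c, A k, A (Suc k mod n)}" using seg_sub_hull3 by blast
    then show ?thesis using k by (intro UN_I[of k]) simp_all
  next
    case False
    then have xi: "x \<in> inside S" using xP by (simp add: polygon_region_def S_def)
    show ?thesis
    proof (cases "x = c")
      case True
      have "c \<in> convex hull {c, A 0, A (Suc 0 mod n)}" by (rule hull_inc) simp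
      moreover have "(0::nat) < n" using n by simp
      ultimately show ?thesis using True by (intro UN_I[of 0]) simp_all
    next
      case False
      define R where "R = (\<lambda>s. c + s *\<^sub>R (x - c)) ` {1..}"
      have "R \<inter> S \<noteq> {}"
      proof
        assume RS: "R \<inter> S = {}"
        have "connected R" unfolding R_def
          by (intro connected_continuous_image continuous_intros) (simp add: is_interval_connected)
        moreover have "x \<in> R" unfolding R_def by (rule image_eqI[of _ _ 1]) auto
        moreover have "R \<subseteq> - S" using RS by blast
        ultimately have "R \<subseteq> connected_component_set (- S) x"
          by (intro connected_component_maximal)
        moreover have "bounded (connected_component_set (- S) x)" using xi by (simp add: inside_def)
        ultimately have "bounded R" using bounded_subset by blast
        then show False using ray_unbounded[OF False] unfolding R_def by contradiction
      qed
      then obtain s where s: "s \<ge> 1" and yS: "c + s *\<^sub>R (x - c) \<in> S" unfolding R_def by auto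
      define y where "y = c + s *\<^sub>R (x - c)"
      have "y \<in> (\<Union>k<n. closed_segment (A k) (A (Suc k mod n)))" using yS SE unfolding y_def by simp
      then obtain k where k: "k < n" and yE: "y \<in> closed_segment (A k) (A (Suc k mod n))"
        by (elim UN_E) simp
      have "x = (1 - 1/s) *\<^sub>R c + (1/s) *\<^sub>R y" using s by (simp add: y_def algebra_simps)
      then have "x \<in> closed_segment c y" unfolding in_segment using s by (intro exI[of _ "1/s"]) auto
      moreover have cs: "closed_segment c y \<subseteq> convex hull {c, A k, A (Suc k mod n)}"
      proof (rule closed_segment_subset_convex_hull)
        show "c \<in> convex hull {c, A k, A (Suc k mod n)}" by (rule hull_inc) simp
        show "y \<in> convex hull {c, A k, A (Suc k mod n)}" using yE seg_sub_hull3 by blast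
      qed
      ultimately have "x \<in> convex hull {c, A k, A (Suc k mod n)}" by (rule subsetD[rotated])
      then show ?thesis using k by (intro UN_I[of k]) simp_all
    qed
  qed
qed


lemma not_interior_tri:
  assumes sp: "simple_polygon n A" and kc: "c \<in> kernel (polygon_region n A)" and k: "k < n"
    and yS: "y \<in> path_image (polygon_boundary n A)"
  shows "y \<notin> interior (convex hull {c, A k, A (Suc k mod n)})"
proof
  assume yi: "y \<in> interior (convex hull {c, A k, A (Suc k mod n)})"
  define S where "S = path_image (polygon_boundary n A)"
  have n: "1 \<le> n" using sp by (simp add: simple_polygon_def)
  have spp: "simple_path (polygon_boundary n A)" using sp by (simp add: simple_polygon_def)
  have fr: "frontier (outside S) = S" unfolding S_def by (rule jordan_facts(1)[OF spp poly_loop])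
  have "y \<in> closure (outside S)" using yS fr unfolding S_def frontier_def by blast
  obtain e where e: "0 < e" "ball y e \<subseteq> interior (convex hull {c, A k, A (Suc k mod n)})"
    using yi open_interior open_contains_ball by blast
  obtain z where z: "z \<in> outside S" "dist y z < e"
    using closure_approachableD[OF \<open>y \<in> closure (outside S)\<close> e(1)] by blast
  have "z \<in> ball y e" using z(2) by simp
  then have "z \<in> interior (convex hull {c, A k, A (Suc k mod n)})" using e(2) by blast
  then have "z \<in> convex hull {c, A k, A (Suc k mod n)}" using interior_subset by blast
  then have "z \<in> polygon_region n A" using tri_sub_region[OF kc n k] by blast
  then show False using z(1) by (simp add: polygon_region_def S_def outside_inside)
qed

lemma inner2: "(x::real^2) \<bullet> y = x$1 * y$1 + x$2 * y$2"
  by (simp add: inner_vec_def UNIV_2)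

lemma negligible_collinear:
  assumes D: "DD c p q = 0"
  shows "negligible (convex hull {c, p, q})"
proof -
  have main: "negligible (convex hull {c, p, q})" if w: "w \<noteq> 0" "w \<bullet> (p - c) = 0" "w \<bullet> (q - c) = 0" for w
  proof -
    have "convex hull {c, p, q} \<subseteq> {x. w \<bullet> x = w \<bullet> c}"
      by (rule hull_minimal) (use w in \<open>auto simp: convex_hyperplane inner_diff_right\<close>)
    then show ?thesis using negligible_hyperplane[of w "w \<bullet> c"] w(1) negligible_subset by blast
  qed
  show ?thesis
  proof (cases "p - c = 0")
    case False
    define w :: "real^2" where "w = vector [- (p - c)$2, (p - c)$1]"
    have "w \<noteq> 0" using False by (auto simp: w_def vec_eq_iff forall_2)
    moreover have "w \<bullet> (p - c) = 0" by (simp add: w_def inner2 algebra_simps)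
    moreover have "w \<bullet> (q - c) = 0" using D by (simp add: w_def inner2 DD_def algebra_simps)
    ultimately show ?thesis by (rule main)
  next
    case pc: True
    show ?thesis
    proof (cases "q - c = 0")
      case False
      define w :: "real^2" where "w = vector [- (q - c)$2, (q - c)$1]"
      have "w \<noteq> 0" using False by (auto simp: w_def vec_eq_iff forall_2)
      moreover have "w \<bullet> (p - c) = 0" using pc by simp
      moreover have "w \<bullet> (q - c) = 0" by (simp add: w_def inner2 algebra_simps)
      ultimately show ?thesis by (rule main)
    next
      case True
      then have "{c, p, q} = {c}" using pc by auto
      then show ?thesis by simp
    qed
  qed
qed

lemma edge_pt:
  assumes D: "DD c p q \<noteq> 0" and z: "z \<in> interior (convex hull {c, p, q})"
  shows "\<exists>g. 0 < g \<and> g < 1 \<and> c + (1 / (bb c p q z + bg c p q z)) *\<^sub>R (z - c) = (1 - g) *\<^sub>R p + g *\<^sub>R q"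
proof -
  let ?b = "bb c p q z" and ?g = "bg c p q z"
  have pos: "0 < ?b" "0 < ?g" "?b + ?g < 1" using interior_pos[OF D z] by auto
  define s where "s = ?b + ?g"
  have s0: "0 < s" using pos by (simp add: s_def)
  have zc: "z - c = ?b *\<^sub>R (p - c) + ?g *\<^sub>R (q - c)" using bary_decomp[OF D, of z] by (simp add: algebra_simps)
  have "c + (1 / s) *\<^sub>R (z - c) = (1 - ?g / s) *\<^sub>R p + (?g / s) *\<^sub>R q"
  proof -
    have b: "?b / s = 1 - ?g / s" using s0 by (simp add: s_def field_simps)
    have "c + (1 / s) *\<^sub>R (z - c) = c + (?b / s) *\<^sub>R (p - c) + (?g / s) *\<^sub>R (q - c)"
      unfolding zc by (simp add: scaleR_add_right)
    also have "\<dots> = (1 - ?g / s) *\<^sub>R p + (?g / s) *\<^sub>R q" unfolding b by (simp add: algebra_simps)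
    finally show ?thesis .
  qed
  moreover have "0 < ?g / s" "?g / s < 1" using pos s0 by (simp_all add: s_def field_simps)
  ultimately show ?thesis unfolding s_def by blast
qed

lemma scale_interior:
  assumes D: "DD c p q \<noteq> 0" and z: "z \<in> interior (convex hull {c, p, q})"
    and t: "0 < t" "t * (bb c p q z + bg c p q z) < 1"
  shows "c + t *\<^sub>R (z - c) \<in> interior (convex hull {c, p, q})"
proof -
  have pos: "0 < bb c p q z" "0 < bg c p q z" using interior_pos[OF D z] by auto
  show ?thesis
    by (rule pos_interior[OF D]) (use pos t in \<open>simp_all add: bary_shift(5,6)[OF D] distrib_left\<close>)
qed


lemma overlap_aux:
  assumes sp: "simple_polygon n A" and kc: "c \<in> kernel (polygon_region n A)"
    and j: "j < n" and k: "k < n" and jk: "j \<noteq> k"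
    and Dj: "DD c (A j) (A (Suc j mod n)) \<noteq> 0" and Dk: "DD c (A k) (A (Suc k mod n)) \<noteq> 0"
    and zj: "z \<in> interior (convex hull {c, A j, A (Suc j mod n)})"
    and zk: "z \<in> interior (convex hull {c, A k, A (Suc k mod n)})"
    and le: "bb c (A k) (A (Suc k mod n)) z + bg c (A k) (A (Suc k mod n)) z
             \<le> bb c (A j) (A (Suc j mod n)) z + bg c (A j) (A (Suc j mod n)) z"
  shows False
proof -
  define sj where "sj = bb c (A j) (A (Suc j mod n)) z + bg c (A j) (A (Suc j mod n)) z"
  define sk where "sk = bb c (A k) (A (Suc k mod n)) z + bg c (A k) (A (Suc k mod n)) z"
  define y where "y = c + (1 / sj) *\<^sub>R (z - c)"
  have n: "1 \<le> n" using sp by (simp add: simple_polygon_def)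
  have spp: "simple_path (polygon_boundary n A)" using sp by (simp add: simple_polygon_def)
  have sj0: "0 < sj" using interior_pos[OF Dj zj] by (simp add: sj_def)
  obtain g where g: "0 < g" "g < 1" and yj: "y = (1 - g) *\<^sub>R A j + g *\<^sub>R A (Suc j mod n)"
    using edge_pt[OF Dj zj] unfolding y_def sj_def by blast
  have "y \<in> closed_segment (A j) (A (Suc j mod n))" unfolding yj in_segment using g by (intro exI[of _ g]) simp
  then have yS: "y \<in> path_image (polygon_boundary n A)" using poly_image[OF n] j by blast
  show False
  proof (cases "sk < sj")
    case True
    have "y \<in> interior (convex hull {c, A k, A (Suc k mod n)})"
      unfolding y_def by (rule scale_interior[OF Dk zk]) (use sj0 True in \<open>simp_all add: sk_def[symmetric] field_simps\<close>)
    then show False using not_interior_tri[OF sp kc k yS] by blast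
  next
    case False
    then have eq: "sk = sj" using le by (simp add: sk_def sj_def)
    obtain g' where g': "0 < g'" "g' < 1" and yk: "y = (1 - g') *\<^sub>R A k + g' *\<^sub>R A (Suc k mod n)"
      using edge_pt[OF Dk zk] eq unfolding y_def sk_def sj_def by auto
    show False
    proof (cases "j < k")
      case True
      show False using open_edges_disjoint[OF spp True k g g'] yj yk by simp
    next
      case False
      then have "k < j" using jk by simp
      show False using open_edges_disjoint[OF spp \<open>k < j\<close> j g' g] yj yk by simp
    qed
  qed
qed

lemma overlap:
  assumes sp: "simple_polygon n A" and kc: "c \<in> kernel (polygon_region n A)"
    and j: "j < n" and k: "k < n" and jk: "j \<noteq> k"
    and Dj: "DD c (A j) (A (Suc j mod n)) \<noteq> 0" and Dk: "DD c (A k) (A (Suc k mod n)) \<noteq> 0"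
  shows "negligible (convex hull {c, A j, A (Suc j mod n)} \<inter> convex hull {c, A k, A (Suc k mod n)})"
proof (rule ccontr)
  assume nn: "\<not> ?thesis"
  have "convex (convex hull {c, A j, A (Suc j mod n)} \<inter> convex hull {c, A k, A (Suc k mod n)})"
    by (simp add: convex_Int convex_convex_hull)
  then have "interior (convex hull {c, A j, A (Suc j mod n)} \<inter> convex hull {c, A k, A (Suc k mod n)}) \<noteq> {}"
    using nn negligible_convex_interior by blast
  then obtain z where "z \<in> interior (convex hull {c, A j, A (Suc j mod n)} \<inter> convex hull {c, A k, A (Suc k mod n)})"
    by blast
  then have zj: "z \<in> interior (convex hull {c, A j, A (Suc j mod n)})"
    and zk: "z \<in> interior (convex hull {c, A k, A (Suc k mod n)})" by (simp_all add: interior_Int)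
  show False
  proof (cases "bb c (A k) (A (Suc k mod n)) z + bg c (A k) (A (Suc k mod n)) z
             \<le> bb c (A j) (A (Suc j mod n)) z + bg c (A j) (A (Suc j mod n)) z")
    case True
    show False by (rule overlap_aux[OF sp kc j k jk Dj Dk zj zk True])
  next
    case False
    show False by (rule overlap_aux[OF sp kc k j jk[symmetric] Dk Dj zk zj]) (use False in simp)
  qed
qed


lemma sum_pairs: "(\<Sum>k<2*m. h k) = (\<Sum>i<m. h (2*i) + h (2*i+1))" for h :: "nat \<Rightarrow> real"
  by (induction m) (simp_all add: sum.distrib)

lemma odd_set_Suc: "{k. k < 2 * Suc m \<and> odd k} = insert (2*m+1) {k. k < 2*m \<and> odd k}"
  by (auto, presburger)

lemma even_set_Suc: "{k. k < 2 * Suc m \<and> even k} = insert (2*m) {k. k < 2*m \<and> even k}"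
  by auto

lemma sum_odd: "(\<Sum>k\<in>{k. k < 2*m \<and> odd k}. h k) = (\<Sum>i<m. h (2*i+1))" for h :: "nat \<Rightarrow> real"
proof (induction m)
  case 0 then show ?case by simp
next
  case (Suc m)
  show ?case by (simp only: odd_set_Suc, subst sum.insert) (simp_all add: Suc)
qed

lemma sum_even: "(\<Sum>k\<in>{k. k < 2*m \<and> even k}. h k) = (\<Sum>i<m. h (2*i))" for h :: "nat \<Rightarrow> real"
proof (induction m)
  case 0 then show ?case by simp
next
  case (Suc m)
  show ?case by (simp only: even_set_Suc, subst sum.insert) (simp_all add: Suc)
qed

lemma sum_rotate: "(\<Sum>i<m. g (Suc i mod m)) = (\<Sum>i<m. g i)" for g :: "nat \<Rightarrow> real"
proof (cases m)
  case 0 then show ?thesis by simp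
next
  case (Suc m')
  have "(\<Sum>i<Suc m'. g (Suc i mod Suc m')) = (\<Sum>i<m'. g (Suc i mod Suc m')) + g (Suc m' mod Suc m')"
    by simp
  also have "(\<Sum>i<m'. g (Suc i mod Suc m')) = (\<Sum>i<m'. g (Suc i))"
    by (rule sum.cong) auto
  also have "g (Suc m' mod Suc m') = g 0" by simp
  also have "(\<Sum>i<m'. g (Suc i)) + g 0 = (\<Sum>i<Suc m'. g i)"
    by (subst sum.lessThan_Suc_shift) simp
  finally show ?thesis using Suc by simp
qed

lemma mod2m: "(2*i + 2) mod (2*m) = 2 * (Suc i mod m)" for i m :: nat
proof -
  have "(2*i + 2) = 2 * Suc i" by simp
  then show ?thesis by (simp only: mod_mult_mult1)
qed

lemma combine:
  fixes I F S :: "nat \<Rightarrow> real" and \<mu> :: real and m n :: nat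
  assumes mu: "0 < \<mu>" and nm: "n = 2*m" and m: "0 < m"
    and b1: "\<And>k. k < n \<Longrightarrow> I k \<le> \<mu> * (1/3 * F (Suc k mod n) + 2/3 * S k)"
    and b2: "\<And>k. k < n \<Longrightarrow> I k \<le> \<mu> * (1/3 * F k + 2/3 * S (Suc k mod n))"
  shows "(\<Sum>k<n. I k) / (real n * \<mu>) \<le> 1/3 * (1 / (real n / 2)) * (\<Sum>k\<in>{k. k < n \<and> odd k}. F k)
             + 2/3 * (1 / (real n / 2)) * (\<Sum>k\<in>{k. k < n \<and> even k}. S k)"
    and "(\<Sum>k<n. I k) / (real n * \<mu>) \<le> 1/3 * (1 / (real n / 2)) * (\<Sum>k\<in>{k. k < n \<and> even k}. F k)
             + 2/3 * (1 / (real n / 2)) * (\<Sum>k\<in>{k. k < n \<and> odd k}. S k)"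
proof -
  have sm1: "Suc (2*i) mod n = 2*i+1" if "i < m" for i using that nm by simp
  have sm2: "Suc (2*i+1) mod n = 2 * (Suc i mod m)" if "i < m" for i using mod2m[of i m] nm by simp
  have i1: "2*i < n" "2*i+1 < n" if "i < m" for i using that nm by auto
  have rn: "real n = 2 * real m" using nm by simp
  have pos: "0 < real n * \<mu>" using mu m nm by simp
  have "(\<Sum>k<n. I k) = (\<Sum>i<m. I (2*i) + I (2*i+1))" unfolding nm by (rule sum_pairs)
  also have "\<dots> \<le> (\<Sum>i<m. \<mu> * (1/3 * F (2*i+1) + 2/3 * S (2*i)) + \<mu> * (1/3 * F (2*i+1) + 2/3 * S (2 * (Suc i mod m))))"
  proof (rule sum_mono)
    fix i assume "i \<in> {..<m}"
    then have i: "i < m" by simp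
    show "I (2*i) + I (2*i+1) \<le> \<mu> * (1/3 * F (2*i+1) + 2/3 * S (2*i)) + \<mu> * (1/3 * F (2*i+1) + 2/3 * S (2 * (Suc i mod m)))"
      using b1[OF i1(1)[OF i]] b2[OF i1(2)[OF i]] sm1[OF i] sm2[OF i] by simp
  qed
  also have "\<dots> = \<mu> * (2/3 * (\<Sum>i<m. F (2*i+1)) + 2/3 * (\<Sum>i<m. S (2*i)) + 2/3 * (\<Sum>i<m. S (2 * (Suc i mod m))))"
    by (simp add: sum.distrib sum_distrib_left algebra_simps)
  also have "(\<Sum>i<m. S (2 * (Suc i mod m))) = (\<Sum>i<m. S (2*i))"
    using sum_rotate[of "\<lambda>i. S (2*i)" m] by simp
  finally have A: "(\<Sum>k<n. I k) \<le> \<mu> * (2/3 * (\<Sum>i<m. F (2*i+1)) + 4/3 * (\<Sum>i<m. S (2*i)))"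
    by (simp add: algebra_simps)
  have "(\<Sum>k<n. I k) / (real n * \<mu>) \<le> \<mu> * (2/3 * (\<Sum>i<m. F (2*i+1)) + 4/3 * (\<Sum>i<m. S (2*i))) / (real n * \<mu>)"
    by (rule divide_right_mono[OF A]) (use pos in simp)
  also have "\<dots> = 1/3 * (1 / (real n / 2)) * (\<Sum>k\<in>{k. k < n \<and> odd k}. F k)
             + 2/3 * (1 / (real n / 2)) * (\<Sum>k\<in>{k. k < n \<and> even k}. S k)"
    using mu m unfolding nm sum_odd sum_even by (simp add: field_simps)
  finally show "(\<Sum>k<n. I k) / (real n * \<mu>) \<le> 1/3 * (1 / (real n / 2)) * (\<Sum>k\<in>{k. k < n \<and> odd k}. F k)
             + 2/3 * (1 / (real n / 2)) * (\<Sum>k\<in>{k. k < n \<and> even k}. S k)" .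
  have "(\<Sum>k<n. I k) = (\<Sum>i<m. I (2*i) + I (2*i+1))" unfolding nm by (rule sum_pairs)
  also have "\<dots> \<le> (\<Sum>i<m. \<mu> * (1/3 * F (2*i) + 2/3 * S (2*i+1)) + \<mu> * (1/3 * F (2 * (Suc i mod m)) + 2/3 * S (2*i+1)))"
  proof (rule sum_mono)
    fix i assume "i \<in> {..<m}"
    then have i: "i < m" by simp
    show "I (2*i) + I (2*i+1) \<le> \<mu> * (1/3 * F (2*i) + 2/3 * S (2*i+1)) + \<mu> * (1/3 * F (2 * (Suc i mod m)) + 2/3 * S (2*i+1))"
      using b2[OF i1(1)[OF i]] b1[OF i1(2)[OF i]] sm1[OF i] sm2[OF i] by simp
  qed
  also have "\<dots> = \<mu> * (4/3 * (\<Sum>i<m. S (2*i+1)) + 1/3 * (\<Sum>i<m. F (2*i)) + 1/3 * (\<Sum>i<m. F (2 * (Suc i mod m))))"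
    by (simp add: sum.distrib sum_distrib_left algebra_simps)
  also have "(\<Sum>i<m. F (2 * (Suc i mod m))) = (\<Sum>i<m. F (2*i))"
    using sum_rotate[of "\<lambda>i. F (2*i)" m] by simp
  finally have B: "(\<Sum>k<n. I k) \<le> \<mu> * (2/3 * (\<Sum>i<m. F (2*i)) + 4/3 * (\<Sum>i<m. S (2*i+1)))"
    by (simp add: algebra_simps)
  have "(\<Sum>k<n. I k) / (real n * \<mu>) \<le> \<mu> * (2/3 * (\<Sum>i<m. F (2*i)) + 4/3 * (\<Sum>i<m. S (2*i+1))) / (real n * \<mu>)"
    by (rule divide_right_mono[OF B]) (use pos in simp)
  also have "\<dots> = 1/3 * (1 / (real n / 2)) * (\<Sum>k\<in>{k. k < n \<and> even k}. F k)
             + 2/3 * (1 / (real n / 2)) * (\<Sum>k\<in>{k. k < n \<and> odd k}. S k)"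
    using mu m unfolding nm sum_odd sum_even by (simp add: field_simps)
  finally show "(\<Sum>k<n. I k) / (real n * \<mu>) \<le> 1/3 * (1 / (real n / 2)) * (\<Sum>k\<in>{k. k < n \<and> even k}. F k)
             + 2/3 * (1 / (real n / 2)) * (\<Sum>k\<in>{k. k < n \<and> odd k}. S k)" .
qed


theorem theorem4p2:
  fixes n :: nat and A :: "nat \<Rightarrow> real^2" and c :: "real^2" and f :: "real^2 \<Rightarrow> real"
  assumes nice: "nice_polygon n A c"
    and even_n: "even n"
    and conv: "\<And>k. k < n \<Longrightarrow> convex_on (triangle c (A k) (A (Suc k mod n))) f"
  shows "(avg_area f (polygon_region n A)
           \<le> 1/3 * (1 / (real n / 2)) * (\<Sum>k\<in>{k. k < n \<and> odd k}. f (A k))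
             + 2/3 * (1 / (real n / 2)) * (\<Sum>k\<in>{k. k < n \<and> even k}. avg_segment f c (A k)))
         \<and> (avg_area f (polygon_region n A)
           \<le> 1/3 * (1 / (real n / 2)) * (\<Sum>k\<in>{k. k < n \<and> even k}. f (A k))
             + 2/3 * (1 / (real n / 2)) * (\<Sum>k\<in>{k. k < n \<and> odd k}. avg_segment f c (A k)))"
proof -
  define T where "T = (\<lambda>k. convex hull {c, A k, A (Suc k mod n)})"
  define P where "P = polygon_region n A"
  have sp: "simple_polygon n A" and kc: "c \<in> kernel P"
    and areq: "\<And>k. k < n \<Longrightarrow> measure lebesgue (T k) = measure lebesgue (T 0)"
    using nice unfolding nice_polygon_def P_def T_def triangle_def by auto
  have n3: "3 \<le> n" using sp by (simp add: simple_polygon_def)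
  then have n1: "1 \<le> n" by simp
  have spp: "simple_path (polygon_boundary n A)" using sp by (simp add: simple_polygon_def)
  have cv: "convex_on (T k) f" if "k < n" for k using conv[OF that] by (simp add: T_def triangle_def)
  have cT: "compact (T k)" for k by (simp add: T_def compact_convex_hull)
  have lT: "T k \<in> lmeasurable" for k using cT by (simp add: lmeasurable_compact)
  have PU: "P = (\<Union>k\<in>{..<n}. T k)"
  proof
    show "P \<subseteq> (\<Union>k\<in>{..<n}. T k)" unfolding P_def T_def using region_sub_tris[OF n1] by simp
    show "(\<Union>k\<in>{..<n}. T k) \<subseteq> P" unfolding P_def T_def using tri_sub_region[OF kc[unfolded P_def] n1] by blast
  qed
  have Pnn: "\<not> negligible P"
  proof
    assume "negligible P"
    moreover have "inside (path_image (polygon_boundary n A)) \<subseteq> P" by (simp add: P_def polygon_region_def)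
    ultimately have "negligible (inside (path_image (polygon_boundary n A)))" using negligible_subset by blast
    moreover have "open (inside (path_image (polygon_boundary n A)))"
      by (rule open_inside) (simp add: closed_path_image poly_path)
    moreover have "inside (path_image (polygon_boundary n A)) \<noteq> {}" by (rule jordan_facts(2)[OF spp poly_loop])
    ultimately show False using open_not_negligible by blast
  qed
  define \<mu> where "\<mu> = measure lebesgue (T 0)"
  have mu: "0 < \<mu>"
  proof (rule ccontr)
    assume "\<not> 0 < \<mu>"
    then have "\<mu> = 0" using measure_nonneg[of lebesgue "T 0"] by (simp add: \<mu>_def)
    then have "negligible (T k)" if "k < n" for k using areq[OF that] negligible_iff_measure0[OF lT] by (simp add: \<mu>_def)
    then have "negligible (\<Union>k\<in>{..<n}. T k)" by (intro negligible_Union) auto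
    then show False using Pnn PU by simp
  qed
  have mT: "measure lebesgue (T k) = \<mu>" if "k < n" for k using areq[OF that] by (simp add: \<mu>_def)
  have DDnz: "DD c (A k) (A (Suc k mod n)) \<noteq> 0" if k: "k < n" for k
  proof
    assume "DD c (A k) (A (Suc k mod n)) = 0"
    then have "negligible (T k)" unfolding T_def by (rule negligible_collinear)
    then have "measure lebesgue (T k) = 0" by (rule negligible_imp_measure0)
    then show False using mT[OF k] mu by simp
  qed
  have DDnz': "DD c (A (Suc k mod n)) (A k) \<noteq> 0" if k: "k < n" for k
    using DDnz[OF k] by (simp add: DD_def algebra_simps)
  have Tswap: "convex hull {c, A (Suc k mod n), A k} = T k" for k by (simp add: T_def insert_commute)
  have pw: "pairwise (\<lambda>i j. negligible (T i \<inter> T j)) {..<n}"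
    unfolding pairwise_def T_def using overlap[OF sp kc[unfolded P_def]] DDnz by auto
  have fabs: "f absolutely_integrable_on T k" if "k < n" for k
    using tri_main(1)[OF cv[OF that, unfolded T_def] DDnz[OF that]] by (simp add: T_def)
  have fint: "(f has_integral integral (T k) f) (T k)" if "k < n" for k
    using fabs[OF that] by (simp add: absolutely_integrable_on_def has_integral_integral)
  have intP: "integral P f = (\<Sum>k<n. integral (T k) f)"
    unfolding PU by (rule integral_unique[OF has_integral_UN[OF _ fint pw]]) auto
  have measP: "measure lebesgue P = real n * \<mu>"
    unfolding PU by (subst measure_negligible_finite_Union_image[OF _ lT pw]) (auto simp: mT)
  have b1: "integral (T k) f \<le> \<mu> * (1/3 * f (A (Suc k mod n)) + 2/3 * avg_segment f c (A k))" if k: "k < n" for k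
    using tri_main(3)[OF cv[OF k, unfolded T_def] DDnz[OF k]] mT[OF k] by (simp add: T_def)
  have b2: "integral (T k) f \<le> \<mu> * (1/3 * f (A k) + 2/3 * avg_segment f c (A (Suc k mod n)))" if k: "k < n" for k
    using tri_main(3)[OF cv[OF k, folded Tswap, unfolded T_def] DDnz'[OF k]] mT[OF k] Tswap[of k] by (simp add: T_def)
  obtain m where nm: "n = 2 * m" using even_n by blast
  have m0: "0 < m" using n3 nm by simp
  have avg: "avg_area f (polygon_region n A) = (\<Sum>k<n. integral (T k) f) / (real n * \<mu>)"
    by (simp add: avg_area_def intP[unfolded P_def] measP[unfolded P_def])
  show ?thesis
    unfolding avg
    using combine[OF mu nm m0, of "\<lambda>k. integral (T k) f" "\<lambda>k. f (A k)" "\<lambda>k. avg_segment f c (A k)"] b1 b2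
    by blast
qed


end
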